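(* For every integer $n>0$ there exists an open bounded convex set $P\subset\mathbb R^n$ such that $$\sup_\phi\frac{\int_P|\phi|\,d\mu}{-\mu(P)\inf_P\phi}=2,$$ where the supremum is over all convex functions $\phi:P\to\mathbb R$ with $\phi\in L^1(P)$, $\int_P\phi\,d\mu=0$ and $\phi\not\equiv0$.
   Context: $\mu$ denotes Lebesgue measure on $\mathbb R^n$. *)

theory Defs
  imports "HOL-Analysis.Analysis"
begin

end

theory Submission
  imports Defs "HOL-Analysis.Analysis"
begin

lemma convex_bdd_below:
  fixes f :: "'a::euclidean_space \<Rightarrow> real"
  assumes "open S" "bounded S" "convex_on S f" "a \<in> S"
  shows "\<exists>L. \<forall>x\<in>S. L \<le> f x"
proof -
  obtain r where r: "r > 0" "cball a r \<subseteq> S" using assms(1,4) open_contains_cball by blast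
  have "continuous_on S f" using convex_on_continuous assms(1,3) by blast
  hence "continuous_on (cball a r) f" using r continuous_on_subset by blast
  hence "compact (f ` cball a r)" by (simp add: compact_continuous_image)
  then obtain B where B: "\<forall>y\<in>cball a r. f y \<le> B"
    by (metis bounded_pos compact_imp_bounded image_eqI real_norm_def abs_le_D1)
  obtain D0 where D0: "D0 > 0" "\<forall>x\<in>S. norm x \<le> D0" using assms(2) bounded_pos by blast
  define D where "D = D0 + norm a"
  have Dp: "D > 0" using D0 by (simp add: D_def add_pos_nonneg)
  have Dx: "norm (x - a) \<le> D" if "x \<in> S" for x
    using D0 that norm_triangle_ineq4[of x a] unfolding D_def by fastforce
  define s where "s = r / D"
  have sp: "s > 0" using r Dp by (simp add: s_def)
  show ?thesis
  proof (intro exI ballI)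
    fix x assume x: "x \<in> S"
    define y where "y = a + s *\<^sub>R (a - x)"
    have "norm (y - a) = s * norm (a - x)" using sp by (simp add: y_def)
    also have "\<dots> \<le> s * D" using Dx[OF x] sp by (simp add: norm_minus_commute)
    also have "\<dots> = r" using Dp by (simp add: s_def)
    finally have "y \<in> cball a r" by (simp add: dist_norm norm_minus_commute)
    hence yS: "y \<in> S" and fy: "f y \<le> B" using r B by auto
    define t where "t = 1 / (1 + s)"
    have t: "0 \<le> t" "t \<le> 1" using sp by (auto simp: t_def)
    have "(1 - t) *\<^sub>R x + t *\<^sub>R y = a"
    proof -
      have e1: "1 - t = t * s" and e2: "t + t * s = 1" using sp by (simp_all add: t_def field_simps)
      have "(1 - t) *\<^sub>R x + t *\<^sub>R y = (t * s) *\<^sub>R x + t *\<^sub>R a + (t * s) *\<^sub>R a - (t * s) *\<^sub>R x"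
        unfolding y_def e1 by (simp add: algebra_simps)
      also have "\<dots> = (t + t * s) *\<^sub>R a" by (simp add: algebra_simps)
      finally show ?thesis using e2 by simp
    qed
    hence "f a \<le> (1 - t) * f x + t * f y"
      using convex_onD[OF assms(3) t x yS] by simp
    also have "\<dots> \<le> (1 - t) * f x + t * B" using fy t by (simp add: mult_left_mono)
    finally have "f a \<le> (1 - t) * f x + t * B" .
    moreover have "(1 - t) * f x + t * B = (s * f x + B) / (1 + s)"
    proof -
      have ne: "1 + s \<noteq> 0" using sp by simp
      have "1 - t = s / (1 + s)" using ne by (simp add: t_def field_simps)
      thus ?thesis using ne by (simp add: t_def add_divide_distrib)
    qed
    ultimately have "f a \<le> (s * f x + B) / (1 + s)" by simp
    hence "(1 + s) * f a \<le> s * f x + B" using sp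
      by (simp add: le_divide_eq mult.commute)
    thus "((1 + s) * f a - B) / s \<le> f x" using sp by (simp add: field_simps)
  qed
qed

lemma box_emeasure_fin: "emeasure lebesgue (box (a::real^'n) b) < \<infinity>"
  using emeasure_lborel_box_finite[of a b] by simp

lemma box_measure:
  fixes a b :: "real^'n"
  assumes "\<forall>i. a$i \<le> b$i"
  shows "measure lebesgue (box a b) = (\<Prod>i\<in>UNIV. b$i - a$i)"
proof -
  have "measure lebesgue (box a b) = measure lborel (box a b)" by simp
  also have "\<dots> = measure lborel (cbox a b)"
    using assms by (simp add: measure_lborel_box_eq measure_lborel_cbox_eq)
  also have "\<dots> = (\<Prod>i\<in>UNIV. b$i - a$i)"
  proof (rule content_cbox_cart)
    have "a \<in> cbox a b" using assms by (simp add: mem_box_cart)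
    thus "cbox a b \<noteq> {}" by blast
  qed
  finally show ?thesis .
qed

lemma cont_int:
  fixes g :: "real^'n \<Rightarrow> real"
  assumes "continuous_on (cbox a b) g" "box c d \<subseteq> cbox a b"
  shows "set_integrable lebesgue (box c d) g"
proof -
  have "set_integrable lebesgue (cbox a b) g"
    using absolutely_integrable_continuous[OF assms(1)] by simp
  thus ?thesis by (rule set_integrable_subset) (use assms in auto)
qed

lemma ind_int:
  fixes Z P :: "'a::euclidean_space set"
  assumes "Z \<subseteq> P" "Z \<in> sets lebesgue" "emeasure lebesgue Z < \<infinity>"
  shows "set_integrable lebesgue P (\<lambda>x. indicator Z x * c)"
    and "(LINT x:P|lebesgue. indicator Z x * c) = measure lebesgue Z * c"
proof -
  have e: "(\<lambda>x. indicator P x *\<^sub>R (indicator Z x * c)) = (\<lambda>x. indicator Z x * c)"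
    using assms(1) by (auto simp: indicator_def fun_eq_iff)
  have i: "integrable lebesgue (indicator Z :: _ \<Rightarrow> real)" using assms by simp
  show "set_integrable lebesgue P (\<lambda>x. indicator Z x * c)"
    unfolding set_integrable_def e using i by simp
  show "(LINT x:P|lebesgue. indicator Z x * c) = measure lebesgue Z * c"
    unfolding set_lebesgue_integral_def e using assms by simp
qed

lemma measP: "measure lebesgue (box 0 (1::real^'n)) = 1"
  by (subst box_measure) auto

lemma ub:
  fixes \<phi> :: "real^'n \<Rightarrow> real"
  assumes cv: "convex_on (box 0 1) \<phi>" and int: "set_integrable lebesgue (box 0 1) \<phi>"
    and z: "(LINT x:box 0 1|lebesgue. \<phi> x) = 0"
  shows "(LINT x:box 0 1|lebesgue. \<bar>\<phi> x\<bar>) / (- measure lebesgue (box 0 (1::real^'n)) * (INF x\<in>box 0 1. \<phi> x)) \<le> 2"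
proof -
  let ?P = "box 0 (1::real^'n)"
  have mem: "(\<chi> i. 1/2) \<in> ?P" by (simp add: mem_box_cart)
  obtain L where L: "\<forall>x\<in>?P. L \<le> \<phi> x"
    using convex_bdd_below[OF open_box bounded_box cv mem] by blast
  define I where "I = (INF x\<in>?P. \<phi> x)"
  have bdd: "bdd_below (\<phi> ` ?P)" using L by (auto intro: bdd_belowI2)
  have Ile: "I \<le> \<phi> x" if "x \<in> ?P" for x unfolding I_def by (rule cInf_lower) (use that bdd in auto)
  have num: "0 \<le> (LINT x:?P|lebesgue. \<bar>\<phi> x\<bar>)"
    unfolding set_lebesgue_integral_def by (intro Bochner_Integration.integral_nonneg) (auto simp: indicator_def)
  show ?thesis
  proof (cases "I \<ge> 0")
    case True
    hence "- measure lebesgue ?P * I \<le> 0" using measP by simp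
    thus ?thesis unfolding I_def[symmetric]
      using num by (meson divide_nonneg_nonpos order.trans zero_le_numeral)
  next
    case False
    have ci: "set_integrable lebesgue ?P (\<lambda>x. - 2 * I)"
      by (rule cont_int[of 0 1]) (auto simp: box_subset_cbox)
    have "(LINT x:?P|lebesgue. \<bar>\<phi> x\<bar>) \<le> (LINT x:?P|lebesgue. \<phi> x + - 2 * I)"
    proof (rule set_integral_mono)
      show "set_integrable lebesgue ?P (\<lambda>x. \<bar>\<phi> x\<bar>)"
        using int by (simp add: set_integrable_abs)
      show "set_integrable lebesgue ?P (\<lambda>x. \<phi> x + - 2 * I)"
        using int ci by simp
      fix x assume "x \<in> ?P"
      thus "\<bar>\<phi> x\<bar> \<le> \<phi> x + - 2 * I" using Ile[of x] False by linarith
    qed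
    also have "\<dots> = (LINT x:?P|lebesgue. \<phi> x) + (LINT x:?P|lebesgue. - 2 * I)"
      by (rule set_integral_add(2)[OF int ci])
    also have "\<dots> = - 2 * I"
    proof -
      have "(LINT x:?P|lebesgue. - 2 * I) = measure lebesgue ?P *\<^sub>R (- 2 * I)"
        by (rule set_integral_const) (use box_emeasure_fin[of "0::real^'n" 1] in auto)
      thus ?thesis using z measP[where 'n='n] by simp
    qed
    finally have "(LINT x:?P|lebesgue. \<bar>\<phi> x\<bar>) \<le> 2 * (- I)" by simp
    hence "(LINT x:?P|lebesgue. \<bar>\<phi> x\<bar>) / (- I) \<le> 2" using False
      by (subst pos_divide_le_eq) auto
    thus ?thesis unfolding I_def[symmetric] measP by simp
  qed
qed

lemma lb:
  fixes \<epsilon> :: real and k :: "'n::finite"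
  assumes ep: "0 < \<epsilon>" "\<epsilon> < 1"
  shows "\<exists>\<phi>::real^'n \<Rightarrow> real. convex_on (box 0 1) \<phi> \<and> set_integrable lebesgue (box 0 1) \<phi> \<and>
    (LINT x:box 0 1|lebesgue. \<phi> x) = 0 \<and> (\<exists>x\<in>box 0 1. \<phi> x \<noteq> 0) \<and>
    2 * (1 - \<epsilon>) \<le> (LINT x:box 0 1|lebesgue. \<bar>\<phi> x\<bar>) / (- measure lebesgue (box 0 (1::real^'n)) * (INF x\<in>box 0 1. \<phi> x))"
proof -
  let ?P = "box 0 (1::real^'n)"
  define c where "c = 1 - \<epsilon>"
  have c: "0 < c" "c < 1" using ep by (auto simp: c_def)
  define \<psi> where "\<psi> = (\<lambda>x::real^'n. max 0 (x$k - c))"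
  have cpsi: "continuous_on UNIV \<psi>" unfolding \<psi>_def by (intro continuous_intros)
  have ipsi: "set_integrable lebesgue ?P \<psi>"
    by (rule cont_int[of 0 1]) (auto simp: box_subset_cbox intro: continuous_on_subset[OF cpsi])
  define m where "m = (LINT x:?P|lebesgue. \<psi> x)"
  define W where "W = box (\<chi> i. if i = k then 1 - \<epsilon>/2 else 0) (1::real^'n)"
  have WP: "W \<subseteq> ?P"
  proof
    fix x assume "x \<in> W"
    hence h: "\<forall>i. (if i = k then 1 - \<epsilon>/2 else 0) < x$i \<and> x$i < 1" unfolding W_def by (simp add: mem_box_cart)
    have "0 < x$i \<and> x$i < 1" for i using h[rule_format, of i] ep by (auto split: if_splits)
    thus "x \<in> ?P" by (simp add: mem_box_cart)
  qed
  have mW: "measure lebesgue W = \<epsilon>/2"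
  proof -
    have "measure lebesgue W = (\<Prod>i\<in>UNIV. (1::real^'n)$i - (\<chi> i. if i = k then 1 - \<epsilon>/2 else 0)$i)"
      unfolding W_def by (rule box_measure) (use ep in auto)
    also have "\<dots> = (\<Prod>i\<in>UNIV. if i = k then \<epsilon>/2 else 1)"
      by (rule prod.cong) auto
    finally show ?thesis by simp
  qed
  have iW: "set_integrable lebesgue ?P (\<lambda>x. indicator W x * (\<epsilon>/2))"
    and iW2: "(LINT x:?P|lebesgue. indicator W x * (\<epsilon>/2)) = measure lebesgue W * (\<epsilon>/2)"
    using ind_int[OF WP] box_emeasure_fin unfolding W_def by auto
  have le: "(LINT x:?P|lebesgue. indicator W x * (\<epsilon>/2)) \<le> m" unfolding m_def
  proof (rule set_integral_mono[OF iW ipsi])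
    fix x assume "x \<in> ?P"
    show "indicator W x * (\<epsilon>/2) \<le> \<psi> x"
    proof (cases "x \<in> W")
      case True
      hence "\<forall>i. (if i = k then 1 - \<epsilon>/2 else 0) < x$i \<and> x$i < 1" unfolding W_def by (simp add: mem_box_cart)
      hence "1 - \<epsilon>/2 < x$k" by (metis (full_types))
      hence "\<epsilon>/2 \<le> \<psi> x" unfolding \<psi>_def c_def by linarith
      thus ?thesis using True by simp
    qed (auto simp: \<psi>_def)
  qed
  have "\<epsilon>/2 * (\<epsilon>/2) \<le> m" using le unfolding iW2 mW by assumption
  moreover have "0 < \<epsilon>/2 * (\<epsilon>/2)" using ep by simp
  ultimately have mpos: "m > 0" by linarith
  define Z where "Z = box 0 (\<chi> i. if i = k then c else (1::real))"
  have ZP: "Z \<subseteq> ?P"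
  proof
    fix x assume "x \<in> Z"
    hence h: "\<forall>i. 0 < x$i \<and> x$i < (if i = k then c else 1)" unfolding Z_def by (simp add: mem_box_cart)
    have "0 < x$i \<and> x$i < 1" for i using h[rule_format, of i] c by (auto split: if_splits)
    thus "x \<in> ?P" by (simp add: mem_box_cart)
  qed
  have mZ: "measure lebesgue Z = c"
  proof -
    have "measure lebesgue Z = (\<Prod>i\<in>UNIV. (\<chi> i. if i = k then c else (1::real))$i - (0::real^'n)$i)"
      unfolding Z_def by (rule box_measure) (use c in auto)
    also have "\<dots> = (\<Prod>i\<in>UNIV. if i = k then c else 1)"
      by (rule prod.cong) auto
    finally show ?thesis by simp
  qed
  have iZ: "set_integrable lebesgue ?P (\<lambda>x. indicator Z x * (2 * m))"
    and iZ2: "(LINT x:?P|lebesgue. indicator Z x * (2 * m)) = measure lebesgue Z * (2 * m)"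
    using ind_int[OF ZP] box_emeasure_fin unfolding Z_def by auto
  have psiZ: "\<psi> x = 0" if "x \<in> Z" for x
  proof -
    have "\<forall>i. 0 < x$i \<and> x$i < (if i = k then c else 1)" using that unfolding Z_def by (simp add: mem_box_cart)
    hence "x$k < c" by (metis (full_types))
    thus ?thesis unfolding \<psi>_def by simp
  qed
  have psinn: "\<psi> x \<ge> 0" for x unfolding \<psi>_def by simp
  define \<phi> where "\<phi> = (\<lambda>x. \<psi> x - m)"
  have ic: "set_integrable lebesgue ?P (\<lambda>x. m)"
    by (rule cont_int[of 0 1]) (auto simp: box_subset_cbox)
  have iphi: "set_integrable lebesgue ?P \<phi>" unfolding \<phi>_def using ipsi ic by simp
  have cm: "(LINT x:?P|lebesgue. m) = m"
  proof -
    have "(LINT x:?P|lebesgue. m) = measure lebesgue ?P *\<^sub>R m"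
      by (rule set_integral_const) (use box_emeasure_fin[of "0::real^'n" 1] in auto)
    thus ?thesis using measP[where 'n='n] by simp
  qed
  have zphi: "(LINT x:?P|lebesgue. \<phi> x) = 0"
    unfolding \<phi>_def using set_integral_diff(2)[OF ipsi ic] cm m_def by simp
  have cvx: "convex_on ?P \<phi>"
  proof (rule convex_onI)
    show "convex ?P" by (rule convex_box)
    fix t :: real and x y :: "real^'n" assume t: "0 < t" "t < 1"
    have "max 0 ((1 - t) * x$k + t * y$k - c) \<le> (1 - t) * max 0 (x$k - c) + t * max 0 (y$k - c)"
    proof -
      have 1: "(1 - t) * (x$k - c) \<le> (1 - t) * max 0 (x$k - c)" using t by (intro mult_left_mono) auto
      have 2: "t * (y$k - c) \<le> t * max 0 (y$k - c)" using t by (intro mult_left_mono) auto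
      have 3: "0 \<le> (1 - t) * max 0 (x$k - c)" "0 \<le> t * max 0 (y$k - c)" using t by auto
      have "(1 - t) * x$k + t * y$k - c = (1 - t) * (x$k - c) + t * (y$k - c)" by (simp add: algebra_simps)
      thus ?thesis using 1 2 3 by linarith
    qed
    thus "\<phi> ((1 - t) *\<^sub>R x + t *\<^sub>R y) \<le> (1 - t) * \<phi> x + t * \<phi> y"
      unfolding \<phi>_def \<psi>_def by (simp add: algebra_simps)
  qed
  define z :: "real^'n" where "z = (\<chi> i. c / 2)"
  have zZ: "z \<in> Z" unfolding z_def Z_def using c by (auto simp: mem_box_cart)
  have phiz: "\<phi> z = - m" unfolding \<phi>_def using psiZ[OF zZ] by simp
  have inf: "(INF x\<in>?P. \<phi> x) = - m"
  proof (rule antisym)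
    have "bdd_below (\<phi> ` ?P)" unfolding \<phi>_def using psinn by (auto intro!: bdd_belowI2[of _ "-m"])
    thus "(INF x\<in>?P. \<phi> x) \<le> - m" using phiz zZ ZP by (metis cINF_lower subsetD)
    show "- m \<le> (INF x\<in>?P. \<phi> x)"
      by (rule cINF_greatest) (use zZ ZP in \<open>auto simp: \<phi>_def psinn\<close>)
  qed
  have "(LINT x:?P|lebesgue. \<phi> x + indicator Z x * (2 * m)) \<le> (LINT x:?P|lebesgue. \<bar>\<phi> x\<bar>)"
  proof (rule set_integral_mono)
    show "set_integrable lebesgue ?P (\<lambda>x. \<phi> x + indicator Z x * (2 * m))" using iphi iZ by simp
    show "set_integrable lebesgue ?P (\<lambda>x. \<bar>\<phi> x\<bar>)" using iphi by (simp add: set_integrable_abs)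
    fix x assume "x \<in> ?P"
    show "\<phi> x + indicator Z x * (2 * m) \<le> \<bar>\<phi> x\<bar>"
    proof (cases "x \<in> Z")
      case True thus ?thesis using psiZ[OF True] mpos by (simp add: \<phi>_def)
    qed simp
  qed
  moreover have "(LINT x:?P|lebesgue. \<phi> x + indicator Z x * (2 * m)) = 2 * m * c"
    using set_integral_add(2)[OF iphi iZ] zphi iZ2 mZ by simp
  ultimately have N: "2 * m * c \<le> (LINT x:?P|lebesgue. \<bar>\<phi> x\<bar>)" by simp
  have "2 * (1 - \<epsilon>) \<le> (LINT x:?P|lebesgue. \<bar>\<phi> x\<bar>) / m"
    using N mpos unfolding c_def by (subst pos_le_divide_eq) (auto simp: algebra_simps)
  hence "2 * (1 - \<epsilon>) \<le> (LINT x:?P|lebesgue. \<bar>\<phi> x\<bar>) / (- measure lebesgue ?P * (INF x\<in>?P. \<phi> x))"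
    unfolding inf measP[where 'n='n] by simp
  moreover have "\<exists>x\<in>?P. \<phi> x \<noteq> 0" using zZ ZP phiz mpos by (intro bexI[of _ z]) auto
  ultimately show ?thesis using cvx iphi zphi by blast
qed

lemma eps_exists:
  fixes y :: ereal
  assumes "y < 2"
  shows "\<exists>\<epsilon>. 0 < \<epsilon> \<and> \<epsilon> < 1 \<and> y < ereal (2 * (1 - \<epsilon>))"
proof (cases y)
  case (real r)
  define \<epsilon> where "\<epsilon> = min (1/2) ((2 - r)/4)"
  have "r < 2" using assms real by simp
  hence "0 < \<epsilon> \<and> \<epsilon> < 1 \<and> r < 2 * (1 - \<epsilon>)" unfolding \<epsilon>_def by (auto simp: min_def field_simps)
  thus ?thesis using real by auto
next
  case PInf thus ?thesis using assms by simp
next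
  case MInf thus ?thesis by (intro exI[of _ "1/2"]) simp
qed

theorem proposition4p3:
  shows "\<exists>P :: (real^'n) set. open P \<and> bounded P \<and> convex P \<and>
    (SUP \<phi> \<in> {\<phi> :: real^'n \<Rightarrow> real. convex_on P \<phi> \<and> set_integrable lebesgue P \<phi> \<and>
                (LINT x:P|lebesgue. \<phi> x) = 0 \<and> (\<exists>x\<in>P. \<phi> x \<noteq> 0)}.
       ereal ((LINT x:P|lebesgue. \<bar>\<phi> x\<bar>) / (- measure lebesgue P * (INF x\<in>P. \<phi> x)))) = 2"
proof (intro exI[of _ "box 0 (1::real^'n)"] conjI open_box bounded_box convex_box antisym)
  show "(SUP \<phi> \<in> {\<phi> :: real^'n \<Rightarrow> real. convex_on (box 0 1) \<phi> \<and> set_integrable lebesgue (box 0 1) \<phi> \<and>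
                (LINT x:box 0 1|lebesgue. \<phi> x) = 0 \<and> (\<exists>x\<in>box 0 1. \<phi> x \<noteq> 0)}.
       ereal ((LINT x:box 0 1|lebesgue. \<bar>\<phi> x\<bar>) / (- measure lebesgue (box 0 (1::real^'n)) * (INF x\<in>box 0 1. \<phi> x)))) \<le> 2"
    by (rule SUP_least) (use ub in auto)
  show "2 \<le> (SUP \<phi> \<in> {\<phi> :: real^'n \<Rightarrow> real. convex_on (box 0 1) \<phi> \<and> set_integrable lebesgue (box 0 1) \<phi> \<and>
                (LINT x:box 0 1|lebesgue. \<phi> x) = 0 \<and> (\<exists>x\<in>box 0 1. \<phi> x \<noteq> 0)}.
       ereal ((LINT x:box 0 1|lebesgue. \<bar>\<phi> x\<bar>) / (- measure lebesgue (box 0 (1::real^'n)) * (INF x\<in>box 0 1. \<phi> x))))"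
    unfolding le_SUP_iff
  proof (intro allI impI)
    fix y :: ereal assume "y < 2"
    then obtain \<epsilon> where e: "0 < \<epsilon>" "\<epsilon> < 1" "y < ereal (2 * (1 - \<epsilon>))" using eps_exists by blast
    obtain \<phi> :: "real^'n \<Rightarrow> real" where \<phi>: "convex_on (box 0 1) \<phi>" "set_integrable lebesgue (box 0 1) \<phi>"
      "(LINT x:box 0 1|lebesgue. \<phi> x) = 0" "(\<exists>x\<in>box 0 1. \<phi> x \<noteq> 0)"
      "2 * (1 - \<epsilon>) \<le> (LINT x:box 0 1|lebesgue. \<bar>\<phi> x\<bar>) / (- measure lebesgue (box 0 (1::real^'n)) * (INF x\<in>box 0 1. \<phi> x))"
      using lb[OF e(1,2)] by blast
    have "y < ereal ((LINT x:box 0 1|lebesgue. \<bar>\<phi> x\<bar>) / (- measure lebesgue (box 0 (1::real^'n)) * (INF x\<in>box 0 1. \<phi> x)))"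
      using e(3) \<phi>(5) by (meson ereal_less_eq(3) order_less_le_trans)
    thus "\<exists>i\<in>{\<phi> :: real^'n \<Rightarrow> real. convex_on (box 0 1) \<phi> \<and> set_integrable lebesgue (box 0 1) \<phi> \<and>
                (LINT x:box 0 1|lebesgue. \<phi> x) = 0 \<and> (\<exists>x\<in>box 0 1. \<phi> x \<noteq> 0)}.
       y < ereal ((LINT x:box 0 1|lebesgue. \<bar>i x\<bar>) / (- measure lebesgue (box 0 (1::real^'n)) * (INF x\<in>box 0 1. i x)))"
      using \<phi> by blast
  qed
qed

end
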